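(* Let $G=(V,E)$ be an $n$-vertex graph with at least one edge, and define $$\delta_1(G)=\min_{uv\in E}|N(u)\cup N(v)|,\qquad \delta_2(G)=\max_{uv\in E}|N(u)\cup N(v)|.$$ Then $$2\le \frac{3n+2-3\delta_2(G)}{n+1-\delta_2(G)}\le av_1(G)\le \frac{n+4-\delta_1(G)}{2}\le\frac{n+2}{2}.$$
   Context: All graphs are finite and simple. For a graph $G=(V,E)$, a set $S\subseteq V$ is a $1$-nearly independent vertex set if the subgraph induced by $S$ has exactly one edge. $\sigma_1(G)$ is the number of such sets, $S_1(G)$ the sum of their sizes, and $av_1(G)=S_1(G)/\sigma_1(G)$. $N(v)$ is the set of neighbours of $v$. *)

theory Defs
  imports Complex_Main
begin

definition simple_graph :: "'a set \<Rightarrow> ('a \<Rightarrow> 'a \<Rightarrow> bool) \<Rightarrow> bool" where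
  "simple_graph V E \<longleftrightarrow> finite V \<and> (\<forall>u v. E u v \<longrightarrow> u \<in> V \<and> v \<in> V)
     \<and> (\<forall>u v. E u v \<longrightarrow> E v u) \<and> (\<forall>v. \<not> E v v)"

definition nbhd :: "'a set \<Rightarrow> ('a \<Rightarrow> 'a \<Rightarrow> bool) \<Rightarrow> 'a \<Rightarrow> 'a set" where
  "nbhd V E v = {u \<in> V. E v u}"

definition edges :: "'a set \<Rightarrow> ('a \<Rightarrow> 'a \<Rightarrow> bool) \<Rightarrow> 'a set set" where
  "edges V E = {{u, v} | u v. u \<in> V \<and> v \<in> V \<and> E u v}"

definition induced_edges :: "('a \<Rightarrow> 'a \<Rightarrow> bool) \<Rightarrow> 'a set \<Rightarrow> 'a set set" where
  "induced_edges E S = {{u, v} | u v. u \<in> S \<and> v \<in> S \<and> E u v}"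

definition nearly_indep_sets :: "'a set \<Rightarrow> ('a \<Rightarrow> 'a \<Rightarrow> bool) \<Rightarrow> 'a set set" where
  "nearly_indep_sets V E = {S. S \<subseteq> V \<and> card (induced_edges E S) = 1}"

definition sigma1 :: "'a set \<Rightarrow> ('a \<Rightarrow> 'a \<Rightarrow> bool) \<Rightarrow> nat" where
  "sigma1 V E = card (nearly_indep_sets V E)"

definition S1 :: "'a set \<Rightarrow> ('a \<Rightarrow> 'a \<Rightarrow> bool) \<Rightarrow> nat" where
  "S1 V E = (\<Sum>S\<in>nearly_indep_sets V E. card S)"

definition av1 :: "'a set \<Rightarrow> ('a \<Rightarrow> 'a \<Rightarrow> bool) \<Rightarrow> real" where
  "av1 V E = real (S1 V E) / real (sigma1 V E)"

definition delta1 :: "'a set \<Rightarrow> ('a \<Rightarrow> 'a \<Rightarrow> bool) \<Rightarrow> nat" where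
  "delta1 V E = Min {card (nbhd V E u \<union> nbhd V E v) | u v. u \<in> V \<and> v \<in> V \<and> E u v}"

definition delta2 :: "'a set \<Rightarrow> ('a \<Rightarrow> 'a \<Rightarrow> bool) \<Rightarrow> nat" where
  "delta2 V E = Max {card (nbhd V E u \<union> nbhd V E v) | u v. u \<in> V \<and> v \<in> V \<and> E u v}"

end

theory Submission
  imports Defs
begin

locale edgeloc =
  fixes V :: "'a set" and E :: "'a \<Rightarrow> 'a \<Rightarrow> bool" and u v :: 'a
  assumes sg: "simple_graph V E" and uv: "E u v"
begin

definition "C = {S. S \<subseteq> V \<and> induced_edges E S = {{u,v}}}"
definition "W = V - (nbhd V E u \<union> nbhd V E v)"

lemma fin: "finite V" and sym: "E a b \<Longrightarrow> E b a" and irr: "\<not> E a a"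
  and inV: "E a b \<Longrightarrow> a \<in> V \<and> b \<in> V"
  using sg unfolding simple_graph_def by blast+

lemma uvV: "u \<in> V" "v \<in> V" "u \<noteq> v" using inV[OF uv] uv irr by auto

lemma finC: "finite C"
proof -
  have "C \<subseteq> Pow V" unfolding C_def by auto
  thus ?thesis using fin finite_subset by blast
qed

lemma L1: "S \<in> C \<Longrightarrow> u \<in> S \<and> v \<in> S \<and> S \<subseteq> V"
proof -
  assume "S \<in> C"
  hence "{u,v} \<in> induced_edges E S" "S \<subseteq> V" unfolding C_def by auto
  then obtain a b where "{u,v} = {a,b}" "a \<in> S" "b \<in> S" unfolding induced_edges_def by auto
  thus ?thesis using \<open>S \<subseteq> V\<close> by (metis doubleton_eq_iff)
qed

lemma L2: "S \<in> C \<Longrightarrow> w \<in> S \<Longrightarrow> w \<noteq> u \<Longrightarrow> w \<noteq> v \<Longrightarrow> w \<in> W"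
proof -
  assume a: "S \<in> C" "w \<in> S" "w \<noteq> u" "w \<noteq> v"
  have ie: "induced_edges E S = {{u,v}}" and SV: "S \<subseteq> V" using a(1) unfolding C_def by auto
  have "\<not> E u w"
  proof
    assume "E u w"
    hence "{u,w} \<in> induced_edges E S" using L1[OF a(1)] a(2) unfolding induced_edges_def by blast
    hence "{u,w} = {u,v}" using ie by auto
    thus False using a by (metis doubleton_eq_iff)
  qed
  moreover have "\<not> E v w"
  proof
    assume "E v w"
    hence "{v,w} \<in> induced_edges E S" using L1[OF a(1)] a(2) unfolding induced_edges_def by blast
    hence "{v,w} = {u,v}" using ie by auto
    thus False using a by (metis doubleton_eq_iff)
  qed
  ultimately show ?thesis using a SV unfolding W_def nbhd_def by auto
qed

lemma L3: "S \<in> C \<Longrightarrow> w \<noteq> u \<Longrightarrow> w \<noteq> v \<Longrightarrow> S - {w} \<in> C"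
proof -
  assume a: "S \<in> C" "w \<noteq> u" "w \<noteq> v"
  have ie: "induced_edges E S = {{u,v}}" and SV: "S \<subseteq> V" using a(1) unfolding C_def by auto
  have "induced_edges E (S - {w}) \<subseteq> induced_edges E S" unfolding induced_edges_def by blast
  moreover have "{u,v} \<in> induced_edges E (S - {w})" using L1[OF a(1)] a uv unfolding induced_edges_def by blast
  ultimately have "induced_edges E (S - {w}) = {{u,v}}" using ie by blast
  thus ?thesis using SV unfolding C_def by auto
qed

lemma WnV: "w \<in> W \<Longrightarrow> w \<noteq> u \<and> w \<noteq> v \<and> w \<in> V \<and> \<not> E u w \<and> \<not> E v w"
  using uv sym uvV unfolding W_def nbhd_def by auto

lemma L5: "w \<in> W \<Longrightarrow> {u,v,w} \<in> C"
proof -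
  assume w: "w \<in> W"
  note x = WnV[OF w]
  have "induced_edges E {u,v,w} = {{u,v}}"
    unfolding induced_edges_def using x uv sym irr by blast
  thus ?thesis using x uvV unfolding C_def by auto
qed

lemma L4: "{u,v} \<in> C"
proof -
  have "induced_edges E {u,v} = {{u,v}}"
    unfolding induced_edges_def using uv sym irr by blast
  thus ?thesis using uvV unfolding C_def by auto
qed

lemma cardC: "card W + 1 \<le> card C"
proof -
  have sub: "insert {u,v} ((\<lambda>w. {u,v,w}) ` W) \<subseteq> C" using L4 L5 by auto
  have finW: "finite W" using fin unfolding W_def by auto
  have inj: "inj_on (\<lambda>w. {u,v,w}) W"
  proof (rule inj_onI)
    fix x y assume "x \<in> W" "y \<in> W" "{u,v,x} = {u,v,y}"
    hence "x \<in> {u,v,y}" "x \<noteq> u" "x \<noteq> v" using WnV by blast+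
    thus "x = y" by blast
  qed
  have "{u,v} \<notin> (\<lambda>w. {u,v,w}) ` W" using WnV by auto
  hence "card (insert {u,v} ((\<lambda>w. {u,v,w}) ` W)) = card W + 1"
    using card_image[OF inj] finW by simp
  thus ?thesis using card_mono[OF finC sub] by simp
qed

lemma finW: "finite W" using fin unfolding W_def by auto

lemma sum_lower: "3 * card C \<le> (\<Sum>S\<in>C. card S) + 1"
proof -
  have ge3: "3 \<le> card S" if "S \<in> C - {{u,v}}" for S
  proof -
    have S: "S \<in> C" "S \<noteq> {u,v}" using that by auto
    then obtain w where w: "w \<in> S" "w \<noteq> u" "w \<noteq> v" using L1[OF S(1)] by blast
    have "{u,v,w} \<subseteq> S" using L1[OF S(1)] w by auto
    moreover have "finite S" using L1[OF S(1)] fin finite_subset by blast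
    ultimately have "card {u,v,w} \<le> card S" by (rule card_mono[rotated])
    thus ?thesis using w uvV by auto
  qed
  have e: "(\<Sum>S\<in>C. card S) = card {u,v} + (\<Sum>S\<in>C - {{u,v}}. card S)"
    using L4 finC by (simp add: sum.remove)
  have m: "(\<Sum>S\<in>C - {{u,v}}. 3) \<le> (\<Sum>S\<in>C - {{u,v}}. card S)"
    by (rule sum_mono) (rule ge3)
  have c: "card (C - {{u,v}}) = card C - 1" using L4 finC by simp
  have "card C \<ge> 1" using cardC by simp
  thus ?thesis using e m c uvV by simp
qed

lemma cardS: "S \<in> C \<Longrightarrow> card S = 2 + card (S \<inter> W)"
proof -
  assume S: "S \<in> C"
  have eq: "S = {u,v} \<union> (S \<inter> W)" using L1[OF S] L2[OF S] by blast
  have "card ({u,v} \<union> (S \<inter> W)) = card {u,v} + card (S \<inter> W)"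
    by (rule card_Un_disjoint) (use WnV finW in auto)
  thus ?thesis using uvV eq by simp
qed

lemma half: "w \<in> W \<Longrightarrow> 2 * card {S\<in>C. w \<in> S} \<le> card C"
proof -
  assume w: "w \<in> W"
  have inj: "inj_on (\<lambda>S. S - {w}) {S\<in>C. w \<in> S}"
  proof (rule inj_onI)
    fix S T assume "S \<in> {S\<in>C. w \<in> S}" "T \<in> {S\<in>C. w \<in> S}" "S - {w} = T - {w}"
    thus "S = T" by blast
  qed
  have sub: "(\<lambda>S. S - {w}) ` {S\<in>C. w \<in> S} \<subseteq> {S\<in>C. w \<notin> S}"
    using L3 WnV[OF w] by auto
  have f2: "finite {S\<in>C. w \<notin> S}" using finC by simp
  have le: "card {S\<in>C. w \<in> S} \<le> card {S\<in>C. w \<notin> S}"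
    using card_mono[OF f2 sub] card_image[OF inj] by simp
  have "card ({S\<in>C. w \<in> S} \<union> {S\<in>C. w \<notin> S}) = card {S\<in>C. w \<in> S} + card {S\<in>C. w \<notin> S}"
    by (rule card_Un_disjoint) (use finC in auto)
  moreover have "C = {S\<in>C. w \<in> S} \<union> {S\<in>C. w \<notin> S}" by blast
  ultimately have "card C = card {S\<in>C. w \<in> S} + card {S\<in>C. w \<notin> S}" by simp
  thus ?thesis using le by linarith
qed

lemma swap: "(\<Sum>S\<in>C. card (S \<inter> W)) = (\<Sum>w\<in>W. card {S\<in>C. w \<in> S})"
proof -
  have a: "card (S \<inter> W) = (\<Sum>w\<in>W. if w \<in> S then 1 else 0)" for S
    using finW by (simp add: sum.If_cases Int_commute)
  have b: "card {S\<in>C. w \<in> S} = (\<Sum>S\<in>C. if w \<in> S then 1 else 0)" for w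
    using finC by (simp add: sum.If_cases Int_def)
  have "(\<Sum>S\<in>C. card (S \<inter> W)) = (\<Sum>S\<in>C. \<Sum>w\<in>W. if w \<in> S then 1 else 0)"
    by (rule sum.cong[OF refl a])
  also have "\<dots> = (\<Sum>w\<in>W. \<Sum>S\<in>C. if w \<in> S then 1 else 0)" by (rule sum.swap)
  also have "\<dots> = (\<Sum>w\<in>W. card {S\<in>C. w \<in> S})"
    by (rule sum.cong[OF refl b[symmetric]])
  finally show ?thesis .
qed

lemma sum_upper: "2 * (\<Sum>S\<in>C. card S) \<le> card C * (card W + 4)"
proof -
  have "(\<Sum>S\<in>C. card S) = (\<Sum>S\<in>C. 2 + card (S \<inter> W))" using cardS by simp
  also have "\<dots> = (\<Sum>S\<in>C. 2) + (\<Sum>S\<in>C. card (S \<inter> W))" by (rule sum.distrib)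
  also have "\<dots> = 2 * card C + (\<Sum>w\<in>W. card {S\<in>C. w \<in> S})" by (simp add: swap)
  finally have e: "2 * (\<Sum>S\<in>C. card S) = 4 * card C + (\<Sum>w\<in>W. 2 * card {S\<in>C. w \<in> S})"
    by (simp add: sum_distrib_left)
  have "(\<Sum>w\<in>W. 2 * card {S\<in>C. w \<in> S}) \<le> (\<Sum>w\<in>W. card C)" using half by (rule sum_mono)
  thus ?thesis using e by (simp add: algebra_simps)
qed

end

definition Dset :: "'a set \<Rightarrow> ('a \<Rightarrow> 'a \<Rightarrow> bool) \<Rightarrow> nat set" where
  "Dset V E = {card (nbhd V E u \<union> nbhd V E v) | u v. u \<in> V \<and> v \<in> V \<and> E u v}"

lemma Dset_facts:
  assumes sg: "simple_graph V E"
  shows "finite (Dset V E)" "\<And>d. d \<in> Dset V E \<Longrightarrow> 2 \<le> d \<and> d \<le> card V"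
proof -
  have fin: "finite V" using sg unfolding simple_graph_def by blast
  have *: "2 \<le> d \<and> d \<le> card V" if dD0: "d \<in> Dset V E" for d
  proof -
    obtain u v where huv: "u \<in> V" "v \<in> V" "E u v" and d: "d = card (nbhd V E u \<union> nbhd V E v)"
      using dD0 unfolding Dset_def by blast
    interpret edgeloc V E u v using sg huv by unfold_locales
    have sub: "nbhd V E u \<union> nbhd V E v \<subseteq> V" unfolding nbhd_def by auto
    have "{u,v} \<subseteq> nbhd V E u \<union> nbhd V E v" using huv sym unfolding nbhd_def by auto
    hence "card {u,v} \<le> d" unfolding d by (rule card_mono[rotated]) (use sub fin finite_subset in blast)
    moreover have "d \<le> card V" unfolding d using card_mono[OF fin sub] .
    ultimately show ?thesis using uvV by simp
  qed
  show "\<And>d. d \<in> Dset V E \<Longrightarrow> 2 \<le> d \<and> d \<le> card V" using * by blast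
  have "Dset V E \<subseteq> {..card V}" using * by auto
  thus "finite (Dset V E)" using finite_subset by blast
qed

definition Cls :: "'a set \<Rightarrow> ('a \<Rightarrow> 'a \<Rightarrow> bool) \<Rightarrow> 'a set \<Rightarrow> 'a set set" where
  "Cls V E e = {S. S \<subseteq> V \<and> induced_edges E S = {e}}"

lemma per_edge:
  assumes sg: "simple_graph V E" and e: "e \<in> edges V E"
  defines "n \<equiv> card V"
  shows "finite (Cls V E e) \<and> 1 \<le> card (Cls V E e)
    \<and> (3 * real n + 2 - 3 * real (delta2 V E)) / (real n + 1 - real (delta2 V E)) * card (Cls V E e)
        \<le> real (\<Sum>S\<in>Cls V E e. card S)
    \<and> real (\<Sum>S\<in>Cls V E e. card S) \<le> (real n + 4 - real (delta1 V E)) / 2 * card (Cls V E e)"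
proof -
  obtain u v where huv: "u \<in> V" "v \<in> V" "E u v" and ee: "e = {u,v}"
    using e unfolding edges_def by blast
  interpret edgeloc V E u v using sg huv by unfold_locales
  have CC: "Cls V E e = C" unfolding Cls_def C_def ee ..
  define d where "d = card (nbhd V E u \<union> nbhd V E v)"
  have dD: "d \<in> Dset V E" unfolding d_def Dset_def using huv by blast
  have DF: "finite (Dset V E)" using Dset_facts[OF sg] by blast
  have d1: "delta1 V E \<le> d" using Min_le[OF DF dD] unfolding delta1_def Dset_def .
  have d2: "d \<le> delta2 V E" using Max_ge[OF DF dD] unfolding delta2_def Dset_def .
  have dn: "delta2 V E \<le> n"
  proof -
    have "delta2 V E \<in> Dset V E" unfolding delta2_def Dset_def[symmetric] using Max_in[OF DF] dD by blast
    thus ?thesis using Dset_facts(2)[OF sg] n_def by blast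
  qed
  have sub: "nbhd V E u \<union> nbhd V E v \<subseteq> V" unfolding nbhd_def by auto
  have cW: "card W = n - d" unfolding W_def d_def n_def by (rule card_Diff_subset[OF finite_subset[OF sub fin] sub])
  have dle: "d \<le> n" unfolding d_def n_def using card_mono[OF fin sub] .
  define c where "c = real (card C)"
  define \<Sigma> where "\<Sigma> = real (\<Sum>S\<in>C. card S)"
  define m where "m = real n - real (delta2 V E)"
  have m0: "m \<ge> 0" using dn unfolding m_def by simp
  have cm: "c \<ge> m + 1" using cardC cW dle d2 unfolding c_def m_def by simp
  have "real (3 * card C) \<le> real ((\<Sum>S\<in>C. card S) + 1)" using sum_lower by (simp only: of_nat_le_iff)
  hence lo: "3 * c \<le> \<Sigma> + 1" unfolding c_def \<Sigma>_def by simp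
  have "real (2 * (\<Sum>S\<in>C. card S)) \<le> real (card C * (card W + 4))" using sum_upper by (simp only: of_nat_le_iff)
  hence up: "2 * \<Sigma> \<le> c * (real (card W) + 4)" unfolding c_def \<Sigma>_def by simp
  have Wr: "real (card W) \<le> real n - real (delta1 V E)" using cW d1 dle by simp
  have L: "(3 * real n + 2 - 3 * real (delta2 V E)) / (real n + 1 - real (delta2 V E)) = (3*m+2)/(m+1)"
    unfolding m_def by (simp add: algebra_simps)
  have "(3*m+2)*c \<le> \<Sigma> * (m+1)"
  proof -
    have "(3*m+2)*c \<le> (3*c - 1)*(m+1)" using cm by (simp add: algebra_simps)
    also have "\<dots> \<le> \<Sigma> * (m+1)" using lo m0 by (intro mult_right_mono) auto
    finally show ?thesis .
  qed
  hence A: "(3*m+2)/(m+1) * c \<le> \<Sigma>" using m0 by (simp add: divide_le_eq mult.commute)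
  have "c * (real (card W) + 4) \<le> c * (real n + 4 - real (delta1 V E))"
    using Wr unfolding c_def by (intro mult_left_mono) auto
  hence "2 * \<Sigma> \<le> c * (real n + 4 - real (delta1 V E))" using up by linarith
  hence B: "\<Sigma> \<le> (real n + 4 - real (delta1 V E)) / 2 * c" by (simp add: mult.commute)
  show ?thesis using finC cardC A B L unfolding CC c_def \<Sigma>_def by simp
qed

theorem mainTheorem8:
  fixes V :: "'a set" and E :: "'a \<Rightarrow> 'a \<Rightarrow> bool"
  assumes "simple_graph V E"
    and "edges V E \<noteq> {}"
  defines "n \<equiv> card V"
  shows "2 \<le> (3 * real n + 2 - 3 * real (delta2 V E)) / (real n + 1 - real (delta2 V E))
       \<and> (3 * real n + 2 - 3 * real (delta2 V E)) / (real n + 1 - real (delta2 V E)) \<le> av1 V E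
       \<and> av1 V E \<le> (real n + 4 - real (delta1 V E)) / 2
       \<and> (real n + 4 - real (delta1 V E)) / 2 \<le> (real n + 2) / 2"
proof -
  note sg = assms(1)
  have fin: "finite V" using sg unfolding simple_graph_def by blast
  define L where "L = (3 * real n + 2 - 3 * real (delta2 V E)) / (real n + 1 - real (delta2 V E))"
  define U where "U = (real n + 4 - real (delta1 V E)) / 2"
  define Es where "Es = edges V E"
  have DF: "finite (Dset V E)" using Dset_facts[OF sg] by blast
  have DN: "Dset V E \<noteq> {}" using assms(2) unfolding Dset_def edges_def by blast
  have d1: "2 \<le> delta1 V E" using Dset_facts(2)[OF sg] Min_in[OF DF DN] unfolding delta1_def Dset_def by blast
  have d2: "delta2 V E \<le> n" using Dset_facts(2)[OF sg] Max_in[OF DF DN] unfolding delta2_def Dset_def n_def by blast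
  have first: "2 \<le> L"
  proof -
    have p: "real n + 1 - real (delta2 V E) > 0" using d2 by simp
    have "2 * (real n + 1 - real (delta2 V E)) \<le> 3 * real n + 2 - 3 * real (delta2 V E)" using d2 by simp
    thus ?thesis unfolding L_def using p by (simp add: le_divide_eq)
  qed
  have last: "U \<le> (real n + 2) / 2" unfolding U_def using d1 by simp
  have finEs: "finite Es"
  proof -
    have "Es \<subseteq> Pow V" unfolding Es_def edges_def using sg unfolding simple_graph_def by auto
    thus ?thesis using fin finite_subset by blast
  qed
  have NIS: "nearly_indep_sets V E = (\<Union>e\<in>Es. Cls V E e)"
  proof
    show "nearly_indep_sets V E \<subseteq> (\<Union>e\<in>Es. Cls V E e)"
    proof
      fix S assume "S \<in> nearly_indep_sets V E"
      hence S: "S \<subseteq> V" "card (induced_edges E S) = 1" unfolding nearly_indep_sets_def by auto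
      then obtain e where e: "induced_edges E S = {e}" using card_1_singletonE by blast
      hence "e \<in> induced_edges E S" by simp
      hence "e \<in> Es" using S(1) unfolding Es_def edges_def induced_edges_def by blast
      thus "S \<in> (\<Union>e\<in>Es. Cls V E e)" using S e unfolding Cls_def by blast
    qed
    show "(\<Union>e\<in>Es. Cls V E e) \<subseteq> nearly_indep_sets V E"
      unfolding Cls_def nearly_indep_sets_def by auto
  qed
  have PE: "finite (Cls V E e) \<and> 1 \<le> card (Cls V E e)
    \<and> L * card (Cls V E e) \<le> real (\<Sum>S\<in>Cls V E e. card S)
    \<and> real (\<Sum>S\<in>Cls V E e. card S) \<le> U * card (Cls V E e)" if he: "e \<in> Es" for e
    using per_edge[OF sg, of e] he unfolding Es_def L_def U_def n_def by simp
  have disj: "\<forall>e\<in>Es. \<forall>e'\<in>Es. e \<noteq> e' \<longrightarrow> Cls V E e \<inter> Cls V E e' = {}"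
    unfolding Cls_def by auto
  have S1e: "S1 V E = (\<Sum>e\<in>Es. \<Sum>S\<in>Cls V E e. card S)"
    unfolding S1_def NIS by (rule sum.UNION_disjoint[OF finEs _ disj]) (use PE in blast)
  have Ne: "sigma1 V E = (\<Sum>e\<in>Es. card (Cls V E e))"
    unfolding sigma1_def NIS by (rule card_UN_disjoint[OF finEs _ disj]) (use PE in blast)
  have RS: "real (S1 V E) = (\<Sum>e\<in>Es. real (\<Sum>S\<in>Cls V E e. card S))" unfolding S1e by simp
  have RN: "real (sigma1 V E) = (\<Sum>e\<in>Es. real (card (Cls V E e)))" unfolding Ne by simp
  have "(\<Sum>e\<in>Es. (1::real)) \<le> (\<Sum>e\<in>Es. real (card (Cls V E e)))"
    using PE by (intro sum_mono) auto
  moreover have "card Es \<ge> 1" using finEs assms(2) unfolding Es_def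
    by (simp add: Suc_leI card_gt_0_iff)
  ultimately have Npos: "real (sigma1 V E) > 0" unfolding RN by simp
  have "L * real (sigma1 V E) = (\<Sum>e\<in>Es. L * real (card (Cls V E e)))" unfolding RN by (simp add: sum_distrib_left)
  also have "\<dots> \<le> real (S1 V E)" unfolding RS using PE by (intro sum_mono) auto
  finally have A: "L \<le> av1 V E" unfolding av1_def using Npos by (simp add: pos_le_divide_eq)
  have "real (S1 V E) \<le> (\<Sum>e\<in>Es. U * real (card (Cls V E e)))" unfolding RS using PE by (intro sum_mono) auto
  also have "\<dots> = U * real (sigma1 V E)" unfolding RN by (simp add: sum_distrib_left)
  finally have B: "av1 V E \<le> U" unfolding av1_def using Npos by (simp add: pos_divide_le_eq)
  show ?thesis using first A B last unfolding L_def U_def by blast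
qed

end
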